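(* Let $n\ge 3$ and $a\in\mathbb{C}^\times$ with $a\neq\pm1$. Let $\{e_{\alpha_i},f_{\alpha_i}\mid 1\leq i\leq 2n-1\}$ be Chevalley generators of the simple Lie algebra $\mathfrak{g}$ of type $A_{2n-1}$, with simple roots $\alpha_1,\dots,\alpha_{2n-1}$ labeled along the Dynkin chain $1-2-\cdots-(2n-1)$. Put $$e_{\alpha_{2n}}=a[f_{\alpha_{2n-1}},[\cdots,[f_{\alpha_2},f_{\alpha_1}]\cdots]],\qquad f_{\alpha_{2n}}=a^{-1}[[\cdots[e_{\alpha_1},e_{\alpha_2}],\cdots],e_{\alpha_{2n-1}}].$$ Then there is a Lie algebra homomorphism $\mathrm{gim}(M_n)\to\mathfrak{g}$ with $e_i\mapsto e_{\alpha_i}-f_{\alpha_{n+i}}$ and $f_i\mapsto f_{\alpha_i}-e_{\alpha_{n+i}}$ for $1\le i\le n$.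
   Context: For $n\geq 3$, $M_n=(m_{i,j})$ is the $n\times n$ integer matrix with $m_{i,i}=2$, $m_{i,i+1}=m_{i+1,i}=-1$ ($1\le i\le n-1$), $m_{1,n}=m_{n,1}=1$, all other entries $0$. $\mathrm{gim}(M_n)$ is the complex Lie algebra generated by $e_i,f_i,h_i$ ($1\le i\le n$) with relations: (R1) $[h_i,e_j]=m_{i,j}e_j$, $[h_i,f_j]=-m_{i,j}f_j$, $[e_i,f_i]=h_i$ for all $i,j$; (R2) for $i\ne j$ with $m_{i,j}\le0$: $[e_i,f_j]=0=[f_i,e_j]$, $(\mathrm{ad}\,e_i)^{1-m_{i,j}}e_j=0=(\mathrm{ad}\,f_i)^{1-m_{i,j}}f_j$; (R3) for $i\ne j$ with $m_{i,j}>0$: $[e_i,e_j]=0=[f_i,f_j]$, $(\mathrm{ad}\,e_i)^{m_{i,j}+1}f_j=0=(\mathrm{ad}\,f_i)^{m_{i,j}+1}e_j$. Chevalley generators $e_{\alpha_i},f_{\alpha_i}$ satisfy the standard Serre presentation with $h_{\alpha_i}=[e_{\alpha_i},f_{\alpha_i}]$. *)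

theory Defs
  imports Complex_Main
begin

section \<open>The target: sl_N(C) as N x N complex matrices (indices 0..N-1)\<close>

type_synonym cmat = "nat \<Rightarrow> nat \<Rightarrow> complex"

definition is_mat :: "nat \<Rightarrow> cmat \<Rightarrow> bool" where
  "is_mat N X \<longleftrightarrow> (\<forall>i j. (N \<le> i \<or> N \<le> j) \<longrightarrow> X i j = 0)"

definition mzero :: cmat where "mzero = (\<lambda>i j. 0)"
definition madd :: "cmat \<Rightarrow> cmat \<Rightarrow> cmat" where "madd X Y = (\<lambda>i j. X i j + Y i j)"
definition msub :: "cmat \<Rightarrow> cmat \<Rightarrow> cmat" where "msub X Y = (\<lambda>i j. X i j - Y i j)"
definition msmul :: "complex \<Rightarrow> cmat \<Rightarrow> cmat" where "msmul c X = (\<lambda>i j. c * X i j)"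
definition mmul :: "nat \<Rightarrow> cmat \<Rightarrow> cmat \<Rightarrow> cmat" where
  "mmul N X Y = (\<lambda>i j. \<Sum>k<N. X i k * Y k j)"

definition br :: "nat \<Rightarrow> cmat \<Rightarrow> cmat \<Rightarrow> cmat" where
  "br N X Y = msub (mmul N X Y) (mmul N Y X)"

definition sl :: "nat \<Rightarrow> cmat set" where
  "sl N = {X. is_mat N X \<and> (\<Sum>i<N. X i i) = 0}"

definition is_lie_subalg :: "nat \<Rightarrow> cmat set \<Rightarrow> bool" where
  "is_lie_subalg N S \<longleftrightarrow> S \<subseteq> sl N \<and> mzero \<in> S \<and>
     (\<forall>X\<in>S. \<forall>Y\<in>S. madd X Y \<in> S) \<and> (\<forall>c. \<forall>X\<in>S. msmul c X \<in> S) \<and>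
     (\<forall>X\<in>S. \<forall>Y\<in>S. br N X Y \<in> S)"

definition generates_sl :: "nat \<Rightarrow> cmat set \<Rightarrow> bool" where
  "generates_sl N G \<longleftrightarrow> (\<forall>S. is_lie_subalg N S \<and> G \<subseteq> S \<longrightarrow> S = sl N)"

definition cartanA :: "nat \<Rightarrow> nat \<Rightarrow> int" where
  "cartanA i j = (if i = j then 2 else if i = j + 1 \<or> j = i + 1 then -1 else 0)"

definition chevalley_gens :: "nat \<Rightarrow> (nat \<Rightarrow> cmat) \<Rightarrow> (nat \<Rightarrow> cmat) \<Rightarrow> bool" where
  "chevalley_gens N E F \<longleftrightarrow>
     (\<forall>i\<in>{1..<N}. E i \<in> sl N \<and> F i \<in> sl N) \<and>
     generates_sl N (E ` {1..<N} \<union> F ` {1..<N}) \<and>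
     (\<forall>i\<in>{1..<N}. \<forall>j\<in>{1..<N}.
        br N (br N (E i) (F i)) (br N (E j) (F j)) = mzero \<and>
        br N (br N (E i) (F i)) (E j) = msmul (of_int (cartanA i j)) (E j) \<and>
        br N (br N (E i) (F i)) (F j) = msmul (- of_int (cartanA i j)) (F j) \<and>
        (i \<noteq> j \<longrightarrow>
           br N (E i) (F j) = mzero \<and>
           ((br N (E i)) ^^ nat (1 - cartanA i j)) (E j) = mzero \<and>
           ((br N (F i)) ^^ nat (1 - cartanA i j)) (F j) = mzero))"

fun rnest :: "nat \<Rightarrow> (nat \<Rightarrow> cmat) \<Rightarrow> nat \<Rightarrow> cmat" where
  "rnest N F 0 = mzero"
| "rnest N F (Suc 0) = F 1"
| "rnest N F (Suc (Suc k)) = br N (F (Suc (Suc k))) (rnest N F (Suc k))"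

fun lnest :: "nat \<Rightarrow> (nat \<Rightarrow> cmat) \<Rightarrow> nat \<Rightarrow> cmat" where
  "lnest N E 0 = mzero"
| "lnest N E (Suc 0) = E 1"
| "lnest N E (Suc (Suc k)) = br N (lnest N E (Suc k)) (E (Suc (Suc k)))"

definition Mn :: "nat \<Rightarrow> nat \<Rightarrow> nat \<Rightarrow> int" where
  "Mn n i j = (if i = j then 2
               else if i = j + 1 \<or> j = i + 1 then -1
               else if (i = 1 \<and> j = n) \<or> (i = n \<and> j = 1) then 1
               else 0)"

datatype gen = Ge nat | Gf nat | Gh nat

datatype lterm = Gen gen | LZero | LAdd lterm lterm | LSmul complex lterm | LBr lterm lterm

definition adpow :: "nat \<Rightarrow> lterm \<Rightarrow> lterm \<Rightarrow> lterm" where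
  "adpow k x y = ((LBr x) ^^ k) y"

text \<open>The congruence whose quotient of the term algebra is gim(M_n): generated by the
  complex vector space axioms, bilinearity, alternation, Jacobi, and relations (R1)-(R3).\<close>
inductive gim_cong :: "nat \<Rightarrow> lterm \<Rightarrow> lterm \<Rightarrow> bool" for n where
  refl: "gim_cong n t t"
| sym: "gim_cong n s t \<Longrightarrow> gim_cong n t s"
| trans: "gim_cong n s t \<Longrightarrow> gim_cong n t u \<Longrightarrow> gim_cong n s u"
| cAdd: "gim_cong n s s' \<Longrightarrow> gim_cong n t t' \<Longrightarrow> gim_cong n (LAdd s t) (LAdd s' t')"
| cSmul: "gim_cong n s s' \<Longrightarrow> gim_cong n (LSmul c s) (LSmul c s')"
| cBr: "gim_cong n s s' \<Longrightarrow> gim_cong n t t' \<Longrightarrow> gim_cong n (LBr s t) (LBr s' t')"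
| add_assoc: "gim_cong n (LAdd (LAdd s t) u) (LAdd s (LAdd t u))"
| add_comm: "gim_cong n (LAdd s t) (LAdd t s)"
| add_zero: "gim_cong n (LAdd s LZero) s"
| add_neg: "gim_cong n (LAdd s (LSmul (-1) s)) LZero"
| smul_one: "gim_cong n (LSmul 1 s) s"
| smul_assoc: "gim_cong n (LSmul c (LSmul d s)) (LSmul (c * d) s)"
| smul_dist1: "gim_cong n (LSmul c (LAdd s t)) (LAdd (LSmul c s) (LSmul c t))"
| smul_dist2: "gim_cong n (LSmul (c + d) s) (LAdd (LSmul c s) (LSmul d s))"
| br_addL: "gim_cong n (LBr (LAdd s t) u) (LAdd (LBr s u) (LBr t u))"
| br_addR: "gim_cong n (LBr u (LAdd s t)) (LAdd (LBr u s) (LBr u t))"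
| br_smulL: "gim_cong n (LBr (LSmul c s) t) (LSmul c (LBr s t))"
| br_smulR: "gim_cong n (LBr s (LSmul c t)) (LSmul c (LBr s t))"
| br_alt: "gim_cong n (LBr s s) LZero"
| jacobi: "gim_cong n (LAdd (LBr s (LBr t u)) (LAdd (LBr t (LBr u s)) (LBr u (LBr s t)))) LZero"
| R1_he: "i \<in> {1..n} \<Longrightarrow> j \<in> {1..n} \<Longrightarrow>
     gim_cong n (LBr (Gen (Gh i)) (Gen (Ge j))) (LSmul (of_int (Mn n i j)) (Gen (Ge j)))"
| R1_hf: "i \<in> {1..n} \<Longrightarrow> j \<in> {1..n} \<Longrightarrow>
     gim_cong n (LBr (Gen (Gh i)) (Gen (Gf j))) (LSmul (- of_int (Mn n i j)) (Gen (Gf j)))"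
| R1_ef: "i \<in> {1..n} \<Longrightarrow> gim_cong n (LBr (Gen (Ge i)) (Gen (Gf i))) (Gen (Gh i))"
| R2_ef: "i \<in> {1..n} \<Longrightarrow> j \<in> {1..n} \<Longrightarrow> i \<noteq> j \<Longrightarrow> Mn n i j \<le> 0 \<Longrightarrow>
     gim_cong n (LBr (Gen (Ge i)) (Gen (Gf j))) LZero"
| R2_fe: "i \<in> {1..n} \<Longrightarrow> j \<in> {1..n} \<Longrightarrow> i \<noteq> j \<Longrightarrow> Mn n i j \<le> 0 \<Longrightarrow>
     gim_cong n (LBr (Gen (Gf i)) (Gen (Ge j))) LZero"
| R2_ee: "i \<in> {1..n} \<Longrightarrow> j \<in> {1..n} \<Longrightarrow> i \<noteq> j \<Longrightarrow> Mn n i j \<le> 0 \<Longrightarrow>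
     gim_cong n (adpow (nat (1 - Mn n i j)) (Gen (Ge i)) (Gen (Ge j))) LZero"
| R2_ff: "i \<in> {1..n} \<Longrightarrow> j \<in> {1..n} \<Longrightarrow> i \<noteq> j \<Longrightarrow> Mn n i j \<le> 0 \<Longrightarrow>
     gim_cong n (adpow (nat (1 - Mn n i j)) (Gen (Gf i)) (Gen (Gf j))) LZero"
| R3_ee: "i \<in> {1..n} \<Longrightarrow> j \<in> {1..n} \<Longrightarrow> i \<noteq> j \<Longrightarrow> Mn n i j > 0 \<Longrightarrow>
     gim_cong n (LBr (Gen (Ge i)) (Gen (Ge j))) LZero"
| R3_ff: "i \<in> {1..n} \<Longrightarrow> j \<in> {1..n} \<Longrightarrow> i \<noteq> j \<Longrightarrow> Mn n i j > 0 \<Longrightarrow>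
     gim_cong n (LBr (Gen (Gf i)) (Gen (Gf j))) LZero"
| R3_ef: "i \<in> {1..n} \<Longrightarrow> j \<in> {1..n} \<Longrightarrow> i \<noteq> j \<Longrightarrow> Mn n i j > 0 \<Longrightarrow>
     gim_cong n (adpow (nat (Mn n i j + 1)) (Gen (Ge i)) (Gen (Gf j))) LZero"
| R3_fe: "i \<in> {1..n} \<Longrightarrow> j \<in> {1..n} \<Longrightarrow> i \<noteq> j \<Longrightarrow> Mn n i j > 0 \<Longrightarrow>
     gim_cong n (adpow (nat (Mn n i j + 1)) (Gen (Gf i)) (Gen (Ge j))) LZero"

text \<open>A Lie algebra homomorphism gim(M_n) -> sl_N, presented as a map on terms that is
  constant on gim_cong-classes (so it is a map on the quotient gim(M_n)), complex-linear and
  bracket preserving, with values in sl_N.\<close>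
definition gim_hom :: "nat \<Rightarrow> nat \<Rightarrow> (lterm \<Rightarrow> cmat) \<Rightarrow> bool" where
  "gim_hom n N \<phi> \<longleftrightarrow>
     (\<forall>s t. gim_cong n s t \<longrightarrow> \<phi> s = \<phi> t) \<and>
     (\<forall>t. \<phi> t \<in> sl N) \<and>
     \<phi> LZero = mzero \<and>
     (\<forall>s t. \<phi> (LAdd s t) = madd (\<phi> s) (\<phi> t)) \<and>
     (\<forall>c t. \<phi> (LSmul c t) = msmul c (\<phi> t)) \<and>
     (\<forall>s t. \<phi> (LBr s t) = br N (\<phi> s) (\<phi> t))"

end

theory Submission
  imports Defs
begin


lemmas mdefs = madd_def msub_def msmul_def mzero_def

lemma mmul_assoc: "mmul N (mmul N x y) z = mmul N x (mmul N y z)"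
proof -
  have "\<And>i j. (\<Sum>k<N. (\<Sum>l<N. x i l * y l k) * z k j) = (\<Sum>l<N. x i l * (\<Sum>k<N. y l k * z k j))"
    by (simp add: sum_distrib_left sum_distrib_right mult.assoc) (rule sum.swap)
  then show ?thesis by (simp add: mmul_def fun_eq_iff)
qed

lemma mmul_msub_L: "mmul N (msub x y) z = msub (mmul N x z) (mmul N y z)"
  by (simp add: mmul_def msub_def fun_eq_iff algebra_simps sum_subtractf)
lemma mmul_msub_R: "mmul N z (msub x y) = msub (mmul N z x) (mmul N z y)"
  by (simp add: mmul_def msub_def fun_eq_iff algebra_simps sum_subtractf)
lemma mmul_madd_L: "mmul N (madd x y) z = madd (mmul N x z) (mmul N y z)"
  by (simp add: mmul_def madd_def fun_eq_iff algebra_simps sum.distrib)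
lemma mmul_madd_R: "mmul N z (madd x y) = madd (mmul N z x) (mmul N z y)"
  by (simp add: mmul_def madd_def fun_eq_iff algebra_simps sum.distrib)
lemma mmul_msmul_L: "mmul N (msmul c x) z = msmul c (mmul N x z)"
  by (simp add: mmul_def msmul_def fun_eq_iff algebra_simps sum_distrib_left)
lemma mmul_msmul_R: "mmul N z (msmul c x) = msmul c (mmul N z x)"
  by (simp add: mmul_def msmul_def fun_eq_iff algebra_simps sum_distrib_left)
lemma mmul_mzero_L: "mmul N mzero z = mzero" by (simp add: mmul_def mzero_def fun_eq_iff)
lemma mmul_mzero_R: "mmul N z mzero = mzero" by (simp add: mmul_def mzero_def fun_eq_iff)

lemma br_msub_L[simp]: "br N (msub x y) z = msub (br N x z) (br N y z)"
  by (simp add: br_def mmul_msub_L mmul_msub_R) (simp add: mdefs fun_eq_iff)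
lemma br_msub_R[simp]: "br N z (msub x y) = msub (br N z x) (br N z y)"
  by (simp add: br_def mmul_msub_L mmul_msub_R) (simp add: mdefs fun_eq_iff)
lemma br_madd_L[simp]: "br N (madd x y) z = madd (br N x z) (br N y z)"
  by (simp add: br_def mmul_madd_L mmul_madd_R) (simp add: mdefs fun_eq_iff)
lemma br_madd_R[simp]: "br N z (madd x y) = madd (br N z x) (br N z y)"
  by (simp add: br_def mmul_madd_L mmul_madd_R) (simp add: mdefs fun_eq_iff)
lemma br_msmul_L[simp]: "br N (msmul c x) z = msmul c (br N x z)"
  by (simp add: br_def mmul_msmul_L mmul_msmul_R) (simp add: mdefs fun_eq_iff algebra_simps)
lemma br_msmul_R[simp]: "br N z (msmul c x) = msmul c (br N z x)"
  by (simp add: br_def mmul_msmul_L mmul_msmul_R) (simp add: mdefs fun_eq_iff algebra_simps)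
lemma br_mzero_L[simp]: "br N mzero z = mzero"
  by (simp add: br_def mmul_mzero_L mmul_mzero_R) (simp add: mdefs fun_eq_iff)
lemma br_mzero_R[simp]: "br N z mzero = mzero"
  by (simp add: br_def mmul_mzero_L mmul_mzero_R) (simp add: mdefs fun_eq_iff)
lemma br_self[simp]: "br N x x = mzero"
  by (simp add: br_def mdefs fun_eq_iff)
lemma br_swap: "br N y x = msmul (-1) (br N x y)"
  by (simp add: br_def mdefs fun_eq_iff)
lemma jacobi: "br N x (br N y z) = madd (br N (br N x y) z) (br N y (br N x z))"
  unfolding br_def
  by (simp add: mmul_msub_L mmul_msub_R mmul_assoc) (simp add: mdefs fun_eq_iff algebra_simps)

lemma msmul_msmul[simp]: "msmul c (msmul d x) = msmul (c*d) x" by (simp add: mdefs fun_eq_iff)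
lemma msmul_mzero[simp]: "msmul c mzero = mzero" by (simp add: mdefs)
lemma msmul_0[simp]: "msmul 0 x = mzero" by (simp add: mdefs)
lemma msmul_1[simp]: "msmul 1 x = x" by (simp add: mdefs)
lemma madd_mzero_L[simp]: "madd mzero x = x" by (simp add: mdefs)
lemma madd_mzero_R[simp]: "madd x mzero = x" by (simp add: mdefs)
lemma msub_mzero_R[simp]: "msub x mzero = x" by (simp add: mdefs)
lemma msub_mzero_L[simp]: "msub mzero x = msmul (-1) x" by (simp add: mdefs)

lemma jac0: "br N x y = mzero \<Longrightarrow> br N x z = mzero \<Longrightarrow> br N x (br N y z) = mzero"
  by (subst jacobi) simp
lemma jac2: "br N (br N x y) z = msub (br N x (br N y z)) (br N y (br N x z))"
  unfolding br_def
  by (simp add: mmul_msub_L mmul_msub_R mmul_assoc) (simp add: mdefs fun_eq_iff algebra_simps)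

lemma sl_madd: "X \<in> sl N \<Longrightarrow> Y \<in> sl N \<Longrightarrow> madd X Y \<in> sl N"
  by (simp add: sl_def is_mat_def madd_def sum.distrib)
lemma sl_msmul: "X \<in> sl N \<Longrightarrow> msmul c X \<in> sl N"
  by (simp add: sl_def is_mat_def msmul_def sum_distrib_left[symmetric])
lemma sl_mzero: "mzero \<in> sl N"
  by (simp add: sl_def is_mat_def mzero_def)
lemma sl_br: assumes "X \<in> sl N" "Y \<in> sl N" shows "br N X Y \<in> sl N"
proof -
  have mx: "is_mat N X" "is_mat N Y" using assms by (auto simp: sl_def)
  have im: "is_mat N (br N X Y)"
    using mx unfolding is_mat_def br_def msub_def mmul_def by auto
  have "(\<Sum>i<N. \<Sum>k<N. X i k * Y k i) = (\<Sum>i<N. \<Sum>k<N. Y i k * X k i)"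
    by (subst sum.swap) (simp add: mult.commute)
  then have "(\<Sum>i<N. br N X Y i i) = 0"
    by (simp add: br_def msub_def mmul_def sum_subtractf)
  with im show ?thesis by (simp add: sl_def)
qed




primrec ev :: "nat \<Rightarrow> (gen \<Rightarrow> cmat) \<Rightarrow> lterm \<Rightarrow> cmat" where
  "ev N g (Gen x) = g x"
| "ev N g LZero = mzero"
| "ev N g (LAdd s t) = madd (ev N g s) (ev N g t)"
| "ev N g (LSmul c t) = msmul c (ev N g t)"
| "ev N g (LBr s t) = br N (ev N g s) (ev N g t)"

lemma ev_adpow: "ev N g (adpow k x y) = ((br N (ev N g x)) ^^ k) (ev N g y)"
  by (induction k) (simp_all add: adpow_def)

lemma hom_lemma:
  assumes sl: "\<And>x. g x \<in> sl N"
  and gh: "\<And>i. g (Gh i) = br N (g (Ge i)) (g (Gf i))"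
  and he: "\<And>i j. i\<in>{1..n} \<Longrightarrow> j\<in>{1..n} \<Longrightarrow>
       br N (g (Gh i)) (g (Ge j)) = msmul (of_int (Mn n i j)) (g (Ge j))"
  and hf: "\<And>i j. i\<in>{1..n} \<Longrightarrow> j\<in>{1..n} \<Longrightarrow>
       br N (g (Gh i)) (g (Gf j)) = msmul (- of_int (Mn n i j)) (g (Gf j))"
  and r2ef: "\<And>i j. i\<in>{1..n} \<Longrightarrow> j\<in>{1..n} \<Longrightarrow> i \<noteq> j \<Longrightarrow> Mn n i j \<le> 0 \<Longrightarrow>
       br N (g (Ge i)) (g (Gf j)) = mzero"
  and r2fe: "\<And>i j. i\<in>{1..n} \<Longrightarrow> j\<in>{1..n} \<Longrightarrow> i \<noteq> j \<Longrightarrow> Mn n i j \<le> 0 \<Longrightarrow>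
       br N (g (Gf i)) (g (Ge j)) = mzero"
  and r2ee: "\<And>i j. i\<in>{1..n} \<Longrightarrow> j\<in>{1..n} \<Longrightarrow> i \<noteq> j \<Longrightarrow> Mn n i j \<le> 0 \<Longrightarrow>
       ((br N (g (Ge i))) ^^ nat (1 - Mn n i j)) (g (Ge j)) = mzero"
  and r2ff: "\<And>i j. i\<in>{1..n} \<Longrightarrow> j\<in>{1..n} \<Longrightarrow> i \<noteq> j \<Longrightarrow> Mn n i j \<le> 0 \<Longrightarrow>
       ((br N (g (Gf i))) ^^ nat (1 - Mn n i j)) (g (Gf j)) = mzero"
  and r3ee: "\<And>i j. i\<in>{1..n} \<Longrightarrow> j\<in>{1..n} \<Longrightarrow> i \<noteq> j \<Longrightarrow> Mn n i j > 0 \<Longrightarrow>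
       br N (g (Ge i)) (g (Ge j)) = mzero"
  and r3ff: "\<And>i j. i\<in>{1..n} \<Longrightarrow> j\<in>{1..n} \<Longrightarrow> i \<noteq> j \<Longrightarrow> Mn n i j > 0 \<Longrightarrow>
       br N (g (Gf i)) (g (Gf j)) = mzero"
  and r3ef: "\<And>i j. i\<in>{1..n} \<Longrightarrow> j\<in>{1..n} \<Longrightarrow> i \<noteq> j \<Longrightarrow> Mn n i j > 0 \<Longrightarrow>
       ((br N (g (Ge i))) ^^ nat (Mn n i j + 1)) (g (Gf j)) = mzero"
  and r3fe: "\<And>i j. i\<in>{1..n} \<Longrightarrow> j\<in>{1..n} \<Longrightarrow> i \<noteq> j \<Longrightarrow> Mn n i j > 0 \<Longrightarrow>
       ((br N (g (Gf i))) ^^ nat (Mn n i j + 1)) (g (Ge j)) = mzero"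
  shows "gim_hom n N (ev N g)"
proof -
  have cong: "ev N g s = ev N g t" if "gim_cong n s t" for s t
    using that
  proof (induction rule: gim_cong.induct)
    case (add_assoc s t u) then show ?case by (simp add: mdefs fun_eq_iff algebra_simps)
  next
    case (add_comm s t) then show ?case by (simp add: mdefs fun_eq_iff algebra_simps)
  next
    case (add_neg s) then show ?case by (simp add: mdefs fun_eq_iff algebra_simps)
  next
    case (smul_dist1 c s t) then show ?case by (simp add: mdefs fun_eq_iff algebra_simps)
  next
    case (smul_dist2 c d s) then show ?case by (simp add: mdefs fun_eq_iff algebra_simps)
  next
    case (jacobi s t u)
    have "br N (ev N g t) (br N (ev N g u) (ev N g s)) =
      madd (br N (br N (ev N g t) (ev N g u)) (ev N g s)) (br N (ev N g u) (br N (ev N g t) (ev N g s)))"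
      by (rule Submission.jacobi)
    then show ?case
      by (simp add: br_swap[of N "ev N g s" "ev N g t"] br_swap[of N "ev N g s" "ev N g u"]
             br_swap[of N "ev N g s" "br N (ev N g t) (ev N g u)"])
         (simp add: mdefs fun_eq_iff algebra_simps)
  next
    case (R1_he i j) then show ?case using he by simp
  next
    case (R1_hf i j) then show ?case using hf by simp
  next
    case (R1_ef i) then show ?case using gh by simp
  next
    case (R2_ef i j) then show ?case using r2ef by simp
  next
    case (R2_fe i j) then show ?case using r2fe by simp
  next
    case (R2_ee i j) then show ?case using r2ee by (simp add: ev_adpow)
  next
    case (R2_ff i j) then show ?case using r2ff by (simp add: ev_adpow)
  next
    case (R3_ee i j) then show ?case using r3ee by simp
  next
    case (R3_ff i j) then show ?case using r3ff by simp
  next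
    case (R3_ef i j) then show ?case using r3ef by (simp add: ev_adpow)
  next
    case (R3_fe i j) then show ?case using r3fe by (simp add: ev_adpow)
  qed simp_all
  have slt: "ev N g t \<in> sl N" for t
    by (induction t) (simp_all add: sl sl_mzero sl_madd sl_msmul sl_br)
  show ?thesis unfolding gim_hom_def using cong slt by simp
qed




fun Ln :: "nat \<Rightarrow> (nat \<Rightarrow> cmat) \<Rightarrow> nat \<Rightarrow> nat \<Rightarrow> cmat" where
  "Ln N G i 0 = G i"
| "Ln N G i (Suc d) = br N (Ln N G i d) (G (i + Suc d))"

definition hh :: "nat \<Rightarrow> (nat \<Rightarrow> cmat) \<Rightarrow> (nat \<Rightarrow> cmat) \<Rightarrow> nat \<Rightarrow> cmat" where
  "hh N E F k = br N (E k) (F k)"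

lemma cartanA_sym: "cartanA i j = cartanA j i"
  by (auto simp: cartanA_def)

lemma cartan_sum: "(\<Sum>p\<in>{i..j}. cartanA m p) =
   (if i \<le> m \<and> m \<le> j then 2 else 0) - (if i \<le> m+1 \<and> m+1 \<le> j then 1 else 0)
   - (if 1 \<le> m \<and> i \<le> m - 1 \<and> m - 1 \<le> j then 1 else 0)"
proof -
  have c: "cartanA m p = (if p = m then 2 else 0) + (if p = m + 1 then -1 else 0)
            + (if p = m - 1 then (if 1 \<le> m then -1 else 0) else 0)" for p
    by (auto simp: cartanA_def)
  show ?thesis
    unfolding c sum.distrib by (simp add: sum.delta')
qed

locale chev =
  fixes N :: nat and E F :: "nat \<Rightarrow> cmat"
  assumes cg: "chevalley_gens N E F"
begin

lemma sl_E: "i \<in> {1..<N} \<Longrightarrow> E i \<in> sl N" and sl_F: "i \<in> {1..<N} \<Longrightarrow> F i \<in> sl N"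
  using cg unfolding chevalley_gens_def by blast+

lemma he: "i \<in> {1..<N} \<Longrightarrow> j \<in> {1..<N} \<Longrightarrow>
   br N (hh N E F i) (E j) = msmul (of_int (cartanA i j)) (E j)"
  using cg unfolding chevalley_gens_def hh_def by blast
lemma hf: "i \<in> {1..<N} \<Longrightarrow> j \<in> {1..<N} \<Longrightarrow>
   br N (hh N E F i) (F j) = msmul (- of_int (cartanA i j)) (F j)"
  using cg unfolding chevalley_gens_def hh_def by blast
lemma hhh: "i \<in> {1..<N} \<Longrightarrow> j \<in> {1..<N} \<Longrightarrow>
   br N (hh N E F i) (hh N E F j) = mzero"
  using cg unfolding chevalley_gens_def hh_def by blast
lemma ef: "i \<in> {1..<N} \<Longrightarrow> j \<in> {1..<N} \<Longrightarrow> i \<noteq> j \<Longrightarrow> br N (E i) (F j) = mzero"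
  using cg unfolding chevalley_gens_def by blast
lemma fe: "i \<in> {1..<N} \<Longrightarrow> j \<in> {1..<N} \<Longrightarrow> i \<noteq> j \<Longrightarrow> br N (F i) (E j) = mzero"
  using ef[of j i] by (subst br_swap) simp
lemma fe_same: "br N (F i) (E i) = msmul (-1) (hh N E F i)"
  by (subst br_swap) (simp add: hh_def)
lemma rel: "i \<in> {1..<N} \<Longrightarrow> j \<in> {1..<N} \<Longrightarrow> i \<noteq> j \<Longrightarrow>
   ((br N (E i)) ^^ nat (1 - cartanA i j)) (E j) = mzero \<and>
   ((br N (F i)) ^^ nat (1 - cartanA i j)) (F j) = mzero"
  using cg unfolding chevalley_gens_def by blast
lemma ee_far: "i \<in> {1..<N} \<Longrightarrow> j \<in> {1..<N} \<Longrightarrow> i \<noteq> j \<Longrightarrow> \<not>(i = j+1 \<or> j = i+1) \<Longrightarrow>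
   br N (E i) (E j) = mzero"
  using rel[of i j] by (simp add: cartanA_def)
lemma ff_far: "i \<in> {1..<N} \<Longrightarrow> j \<in> {1..<N} \<Longrightarrow> i \<noteq> j \<Longrightarrow> \<not>(i = j+1 \<or> j = i+1) \<Longrightarrow>
   br N (F i) (F j) = mzero"
  using rel[of i j] by (simp add: cartanA_def)
lemma ee_adj: "i \<in> {1..<N} \<Longrightarrow> j \<in> {1..<N} \<Longrightarrow> (i = j+1 \<or> j = i+1) \<Longrightarrow>
   br N (E i) (br N (E i) (E j)) = mzero"
  using rel[of i j] by (auto simp: cartanA_def numeral_2_eq_2)
lemma ff_adj: "i \<in> {1..<N} \<Longrightarrow> j \<in> {1..<N} \<Longrightarrow> (i = j+1 \<or> j = i+1) \<Longrightarrow>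
   br N (F i) (br N (F i) (F j)) = mzero"
  using rel[of i j] by (auto simp: cartanA_def numeral_2_eq_2)

lemma gen: "generates_sl N (E ` {1..<N} \<union> F ` {1..<N})"
  using cg unfolding chevalley_gens_def by blast

lemma swap: "chev N F E"
proof -
  have hs: "br N (F i) (E i) = msmul (-1) (hh N E F i)" for i by (subst br_swap) (simp add: hh_def)
  have A: "(\<forall>i\<in>{1..<N}. F i \<in> sl N \<and> E i \<in> sl N)" using sl_E sl_F by blast
  have B: "generates_sl N (F ` {1..<N} \<union> E ` {1..<N})" using gen by (simp add: Un_commute)
  have C: "\<forall>i\<in>{1..<N}. \<forall>j\<in>{1..<N}.
        br N (br N (F i) (E i)) (br N (F j) (E j)) = mzero \<and>
        br N (br N (F i) (E i)) (F j) = msmul (of_int (cartanA i j)) (F j) \<and>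
        br N (br N (F i) (E i)) (E j) = msmul (- of_int (cartanA i j)) (E j) \<and>
        (i \<noteq> j \<longrightarrow>
           br N (F i) (E j) = mzero \<and>
           ((br N (F i)) ^^ nat (1 - cartanA i j)) (F j) = mzero \<and>
           ((br N (E i)) ^^ nat (1 - cartanA i j)) (E j) = mzero)"
  proof (intro ballI)
    fix i j assume ij: "i \<in> {1..<N}" "j \<in> {1..<N}"
    have 1: "br N (br N (F i) (E i)) (br N (F j) (E j)) = mzero"
      using hhh[OF ij] by (simp add: hs)
    have 2: "br N (br N (F i) (E i)) (F j) = msmul (of_int (cartanA i j)) (F j)"
      using hf[OF ij] by (simp add: hs)
    have 3: "br N (br N (F i) (E i)) (E j) = msmul (- of_int (cartanA i j)) (E j)"
      using he[OF ij] by (simp add: hs)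
    have 4: "i \<noteq> j \<longrightarrow> br N (F i) (E j) = mzero \<and>
        (br N (F i) ^^ nat (1 - cartanA i j)) (F j) = mzero \<and>
        (br N (E i) ^^ nat (1 - cartanA i j)) (E j) = mzero"
      using fe[OF ij] rel[OF ij] by simp
    show "br N (br N (F i) (E i)) (br N (F j) (E j)) = mzero \<and>
        br N (br N (F i) (E i)) (F j) = msmul (of_int (cartanA i j)) (F j) \<and>
        br N (br N (F i) (E i)) (E j) = msmul (- of_int (cartanA i j)) (E j) \<and>
        (i \<noteq> j \<longrightarrow>
           br N (F i) (E j) = mzero \<and>
           ((br N (F i)) ^^ nat (1 - cartanA i j)) (F j) = mzero \<and>
           ((br N (E i)) ^^ nat (1 - cartanA i j)) (E j) = mzero)"
      using 1 2 3 4 by blast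
  qed
  show ?thesis
    unfolding chev_def chevalley_gens_def using A B C by blast
qed

end



lemma neg_self: "x = msmul (-1) x \<Longrightarrow> x = mzero"
  by (simp add: mdefs fun_eq_iff)

lemma br_swap0: "br N x y = mzero \<Longrightarrow> br N y x = mzero"
  by (subst br_swap) simp

context chev begin

lemma L2: "m \<in> {1..<N} \<Longrightarrow> 1 \<le> i \<Longrightarrow> i + d < N \<Longrightarrow> (m < i \<or> i + d < m) \<Longrightarrow>
   br N (F m) (Ln N E i d) = mzero"
proof (induction d)
  case 0 then show ?case by (simp only: Ln.simps) (rule fe, auto)
next
  case (Suc d)
  have 1: "br N (F m) (Ln N E i d) = mzero" apply (rule Suc.IH) using Suc.prems by auto
  have 2: "br N (F m) (E (i + Suc d)) = mzero" using Suc.prems by (intro fe) auto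
  show ?case using 1 2 by (simp only: Ln.simps jac0)
qed

lemma L3: "m \<in> {1..<N} \<Longrightarrow> 1 \<le> i \<Longrightarrow> i + d < N \<Longrightarrow> (m + 2 \<le> i \<or> i + d + 2 \<le> m) \<Longrightarrow>
   br N (E m) (Ln N E i d) = mzero"
proof (induction d)
  case 0 then show ?case by (simp only: Ln.simps) (rule ee_far, auto)
next
  case (Suc d)
  have 1: "br N (E m) (Ln N E i d) = mzero" apply (rule Suc.IH) using Suc.prems by auto
  have 2: "br N (E m) (E (i + Suc d)) = mzero" using Suc.prems by (intro ee_far) auto
  show ?case using 1 2 by (simp only: Ln.simps jac0)
qed

lemma L5: "1 \<le> i \<Longrightarrow> i + d + 1 < N \<Longrightarrow>
   br N (E (i+d+1)) (br N (E (i+d+1)) (Ln N E i d)) = mzero"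
proof (cases d)
  case 0
  assume "1 \<le> i" "i + d + 1 < N"
  then show ?thesis using 0 by (simp add: ee_adj)
next
  case (Suc d')
  assume a: "1 \<le> i" "i + d + 1 < N"
  define A where "A = Ln N E i d'"
  define b where "b = E (i + Suc d')"
  define c where "c = E (i + d + 1)"
  have cA: "br N c A = mzero" unfolding A_def c_def using a Suc by (intro L3) auto
  have cb: "br N c (br N c b) = mzero" unfolding b_def c_def using a Suc by (intro ee_adj) auto
  have 1: "br N c (br N A b) = br N A (br N c b)" by (subst jacobi) (simp add: cA)
  have "br N c (br N c (br N A b)) = mzero"
    unfolding 1 by (subst jacobi) (simp add: cA cb)
  then show ?thesis using Suc by (simp add: A_def b_def c_def)
qed

lemma L4: "1 \<le> i \<Longrightarrow> i + d < N \<Longrightarrow> i \<le> m \<Longrightarrow> m \<le> i + d \<Longrightarrow>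
   br N (E m) (Ln N E i d) = mzero"
proof (induction d arbitrary: m)
  case 0 then show ?case by simp
next
  case (Suc d)
  define t where "t = i + Suc d"
  define L where "L = Ln N E i d"
  have LS: "Ln N E i (Suc d) = br N L (E t)" by (simp add: L_def t_def)
  show ?case
  proof (cases "m \<le> i + d")
    case True
    have ih: "br N (E m) L = mzero" unfolding L_def using Suc.prems True by (intro Suc.IH) auto
    have 1: "br N (E m) (br N L (E t)) = br N L (br N (E m) (E t))"
      by (subst jacobi) (simp add: ih)
    show ?thesis
    proof (cases "m < i + d")
      case True
      have "br N (E m) (E t) = mzero" using Suc.prems True by (intro ee_far) (auto simp: t_def)
      then show ?thesis unfolding LS 1 by simp
    next
      case False
      with True have m: "m = i + d" by simp
      show ?thesis
      proof (cases d)
        case 0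
        then show ?thesis unfolding LS 1 using m Suc.prems
          by (simp add: L_def t_def ee_adj)
      next
        case (Suc d')
        define A where "A = Ln N E i d'"
        define b where "b = E m"
        define c where "c = E t"
        define P where "P = br N A b"
        have LP: "L = P" by (simp add: L_def Suc P_def A_def b_def m)
        have bP: "br N b P = mzero" unfolding b_def P_def[symmetric] LP[symmetric] L_def
          using Suc.IH[of m] Suc.prems m by simp
        have Ac: "br N A c = mzero" unfolding A_def c_def t_def
          apply (rule br_swap0, rule L3) using Suc.prems Suc m by auto
        have bbc: "br N b (br N b c) = mzero" unfolding b_def c_def t_def
          using Suc.prems Suc m by (intro ee_adj) auto
        define Q where "Q = br N A (br N b c)"
        have Pc: "br N P c = Q" unfolding P_def Q_def by (subst jac2) (simp add: Ac)
        have Pb: "br N P b = mzero" using bP by (rule br_swap0)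
        have e1: "br N P (br N b c) = br N b Q" by (subst jacobi) (simp add: Pb Pc)
        have e2: "br N b Q = br N (br N b A) (br N b c)" unfolding Q_def
          by (subst jacobi) (simp add: bbc)
        have e3: "br N (br N b A) (br N b c) = msmul (-1) (br N P (br N b c))"
          unfolding P_def by (subst br_swap[of N b A]) simp
        have "br N P (br N b c) = br N b Q" by (rule e1)
        also have "\<dots> = msmul (-1) (br N P (br N b c))" using e2 e3 by simp
        finally have "br N P (br N b c) = mzero" by (rule neg_self)
        then have X: "br N L (br N (E m) (E t)) = mzero" by (simp add: LP b_def c_def)
        show ?thesis unfolding LS 1 by (rule X)
      qed
    qed
  next
    case False
    then have m: "m = t" using Suc.prems by (simp add: t_def)
    have "br N (E t) (br N (E t) L) = mzero" unfolding L_def t_def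
      using L5[of i d] Suc.prems by simp
    then show ?thesis unfolding LS m by (subst br_swap[of N L]) simp
  qed
qed

lemma L1: "m \<in> {1..<N} \<Longrightarrow> 1 \<le> i \<Longrightarrow> i + d < N \<Longrightarrow>
   br N (hh N E F m) (Ln N E i d) = msmul (of_int (\<Sum>p\<in>{i..i+d}. cartanA m p)) (Ln N E i d)"
proof (induction d)
  case 0 then show ?case by (simp add: he)
next
  case (Suc d)
  have "br N (hh N E F m) (Ln N E i (Suc d)) =
     madd (br N (br N (hh N E F m) (Ln N E i d)) (E (i + Suc d)))
          (br N (Ln N E i d) (br N (hh N E F m) (E (i + Suc d))))"
    unfolding Ln.simps by (rule jacobi)
  also have "\<dots> = msmul (of_int (\<Sum>p\<in>{i..i+Suc d}. cartanA m p)) (Ln N E i (Suc d))"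
    using Suc by (simp add: he) (simp add: mdefs fun_eq_iff algebra_simps)
  finally show ?case .
qed

lemma L6: "1 \<le> i \<Longrightarrow> i + d + 1 < N \<Longrightarrow> br N (Ln N E i d) (Ln N E i (Suc d)) = mzero"
proof (induction d)
  case 0 then show ?case by (simp add: ee_adj)
next
  case (Suc d)
  define A where "A = Ln N E i d"
  define b where "b = E (i + Suc d)"
  define c where "c = E (i + Suc (Suc d))"
  define P where "P = br N A b"
  have LP: "Ln N E i (Suc d) = P" by (simp add: P_def A_def b_def)
  have LS: "Ln N E i (Suc (Suc d)) = br N P c" by (simp add: LP[symmetric] c_def)
  have AP: "br N A P = mzero" using Suc by (simp add: A_def LP[symmetric])
  have bP: "br N b P = mzero" unfolding b_def LP[symmetric] using Suc.prems by (intro L4) auto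
  have Ac: "br N A c = mzero" unfolding A_def c_def
    apply (rule br_swap0, rule L3) using Suc.prems by auto
  have bbc: "br N b (br N b c) = mzero" unfolding b_def c_def
    using Suc.prems by (intro ee_adj) auto
  define Q where "Q = br N A (br N b c)"
  have Pc: "br N P c = Q" unfolding P_def Q_def by (subst jac2) (simp add: Ac)
  have Pb: "br N P b = mzero" using bP by (rule br_swap0)
  have PA: "br N P A = mzero" using AP by (rule br_swap0)
  have e1: "br N P (br N b c) = br N b Q" by (subst jacobi) (simp add: Pb Pc)
  have e2: "br N b Q = br N (br N b A) (br N b c)" unfolding Q_def
    by (subst jacobi) (simp add: bbc)
  have e3: "br N (br N b A) (br N b c) = msmul (-1) (br N P (br N b c))"
    unfolding P_def by (subst br_swap[of N b A]) simp
  have "br N b Q = msmul (-1) (br N P (br N b c))" using e2 e3 by simp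
  also have "\<dots> = msmul (-1) (br N b Q)" using e1 by simp
  finally have bQ: "br N b Q = mzero" by (rule neg_self)
  have Pbc: "br N P (br N b c) = mzero" using e1 bQ by simp
  have "br N P Q = mzero" unfolding Q_def by (subst jacobi) (simp add: PA Pbc)
  then show ?case unfolding LP LS Pc .
qed

lemma L7: "1 \<le> i \<Longrightarrow> i + Suc d < N \<Longrightarrow> br N (F i) (Ln N E i (Suc d)) = Ln N E (Suc i) d"
proof (induction d)
  case 0
  have "br N (F i) (br N (E i) (E (Suc i))) = madd (br N (br N (F i) (E i)) (E (Suc i)))
     (br N (E i) (br N (F i) (E (Suc i))))" by (rule jacobi)
  also have "\<dots> = E (Suc i)"
  proof -
    have a: "br N (F i) (E (Suc i)) = mzero" using 0 by (intro fe) auto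
    have b: "br N (hh N E F i) (E (Suc i)) = msmul (of_int (cartanA i (Suc i))) (E (Suc i))"
      using 0 by (intro he) auto
    show ?thesis by (simp add: fe_same a b cartanA_def)
  qed
  finally show ?case by simp
next
  case (Suc d)
  have "br N (F i) (Ln N E i (Suc (Suc d))) =
     madd (br N (br N (F i) (Ln N E i (Suc d))) (E (i + Suc (Suc d))))
          (br N (Ln N E i (Suc d)) (br N (F i) (E (i + Suc (Suc d)))))"
    unfolding Ln.simps by (rule jacobi)
  also have "\<dots> = Ln N E (Suc i) (Suc d)"
  proof -
    have a: "br N (F i) (E (i + Suc (Suc d))) = mzero" using Suc.prems by (intro fe) auto
    have b: "br N (F i) (Ln N E i (Suc d)) = Ln N E (Suc i) d" using Suc by simp
    show ?thesis by (simp only: a b br_mzero_R madd_mzero_R) simp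
  qed
  finally show ?case .
qed

lemma L8: "1 \<le> i \<Longrightarrow> i + Suc d < N \<Longrightarrow>
  br N (F (i + Suc d)) (Ln N E i (Suc d)) = msmul (-1) (Ln N E i d)"
proof -
  assume a: "1 \<le> i" "i + Suc d < N"
  have fA: "br N (F (i + Suc d)) (Ln N E i d) = mzero" using a by (intro L2) auto
  have hA: "br N (hh N E F (i + Suc d)) (Ln N E i d) = msmul (-1) (Ln N E i d)"
    using a by (simp add: L1 cartan_sum)
  have "br N (F (i + Suc d)) (Ln N E i (Suc d)) =
     madd (br N (br N (F (i + Suc d)) (Ln N E i d)) (E (i + Suc d)))
          (br N (Ln N E i d) (br N (F (i + Suc d)) (E (i + Suc d))))"
    unfolding Ln.simps by (rule jacobi)
  also have "\<dots> = msmul (-1) (Ln N E i d)"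
    by (simp only: fA fe_same br_swap[of N "Ln N E i d" "hh N E F (i + Suc d)"] hA br_mzero_L
         madd_mzero_L br_msmul_R msmul_msmul) simp
  finally show ?thesis .
qed

lemma L9: "1 \<le> i \<Longrightarrow> i + Suc d < N \<Longrightarrow> br N (Ln N E i (Suc d)) (Ln N E (Suc i) d) = mzero"
proof (induction d)
  case 0
  have X: "br N (E (Suc i)) (Ln N E i 1) = mzero" using 0 by (intro L4) auto
  have "br N (Ln N E i 1) (E (Suc i)) = mzero" using X by (rule br_swap0)
  then show ?case by simp
next
  case (Suc d)
  define A where "A = Ln N E i (Suc d)"
  define B where "B = Ln N E (Suc i) d"
  define c where "c = E (i + Suc (Suc d))"
  define U where "U = br N A c"
  define V where "V = br N B c"
  have U: "Ln N E i (Suc (Suc d)) = U" by (simp add: U_def A_def c_def)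
  have V: "Ln N E (Suc i) (Suc d) = V" by (simp add: V_def B_def c_def)
  have AB: "br N A B = mzero" using Suc by (simp add: A_def B_def)
  have BA: "br N B A = mzero" using AB by (rule br_swap0)
  have Uc: "br N U c = mzero" unfolding U[symmetric] c_def
    apply (rule br_swap0, rule L4) using Suc.prems by auto
  have Vc: "br N V c = mzero" unfolding V[symmetric] c_def
    apply (rule br_swap0, rule L4) using Suc.prems by auto
  have e1: "br N U V = br N (br N U B) c" unfolding V_def by (subst jacobi) (simp add: Uc)
  have BU: "br N B U = br N A V" unfolding U_def V_def by (subst jacobi) (simp add: BA)
  have e2: "br N U B = msmul (-1) (br N A V)"
    by (subst br_swap) (simp add: BU)
  have e3: "br N (br N A V) c = br N U V"
    by (subst jac2) (simp add: Vc U_def[symmetric] br_swap[of N V U])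
  have "br N U V = br N (br N U B) c" by (rule e1)
  also have "\<dots> = msmul (-1) (br N (br N A V) c)" by (simp add: e2)
  also have "\<dots> = msmul (-1) (br N U V)" by (simp add: e3)
  finally have "br N U V = mzero" by (rule neg_self)
  then show ?case unfolding U V .
qed

lemma L10: "1 \<le> i \<Longrightarrow> i + d < N \<Longrightarrow> i < m \<Longrightarrow> m < i + d \<Longrightarrow>
   br N (F m) (Ln N E i d) = mzero"
proof (induction d)
  case 0 then show ?case by simp
next
  case (Suc d)
  have fe': "br N (F m) (E (i + Suc d)) = mzero" using Suc.prems by (intro fe) auto
  have "br N (F m) (Ln N E i (Suc d)) =
     madd (br N (br N (F m) (Ln N E i d)) (E (i + Suc d)))
          (br N (Ln N E i d) (br N (F m) (E (i + Suc d))))"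
    unfolding Ln.simps by (rule jacobi)
  also have "\<dots> = br N (br N (F m) (Ln N E i d)) (E (i + Suc d))" by (simp only: fe' br_mzero_R madd_mzero_R)
  also have "\<dots> = mzero"
  proof (cases "m < i + d")
    case True then show ?thesis using Suc by simp
  next
    case False
    then have m: "m = i + d" using Suc.prems by simp
    then obtain d' where d: "d = Suc d'" using Suc.prems by (cases d) auto
    have "br N (E (i + Suc d)) (Ln N E i d') = mzero" using Suc.prems d by (intro L3) auto
    then show ?thesis using Suc.prems m d L8[of i d'] by (simp add: br_swap0)
  qed
  finally show ?case .
qed

end



fun Hs :: "nat \<Rightarrow> (nat \<Rightarrow> cmat) \<Rightarrow> (nat \<Rightarrow> cmat) \<Rightarrow> nat \<Rightarrow> cmat" where
  "Hs N E F 0 = hh N E F 1"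
| "Hs N E F (Suc d) = madd (Hs N E F d) (hh N E F (Suc (Suc d)))"

lemma Hs_act: "(\<And>m. m \<in> {1..d+1} \<Longrightarrow> br N (hh N E F m) Z = msmul (w m) Z) \<Longrightarrow>
   br N (Hs N E F d) Z = msmul (\<Sum>m\<in>{1..d+1}. w m) Z"
proof (induction d)
  case 0 then show ?case by simp
next
  case (Suc d)
  have 1: "br N (Hs N E F d) Z = msmul (\<Sum>m\<in>{1..d+1}. w m) Z" using Suc by simp
  have 2: "br N (hh N E F (Suc (Suc d))) Z = msmul (w (Suc (Suc d))) Z" using Suc.prems by simp
  show ?case by (simp only: Hs.simps br_madd_L 1 2) (simp add: mdefs fun_eq_iff algebra_simps)
qed

declare sum.cl_ivl_Suc[simp del]

lemma cartan_colsum: "(\<Sum>m\<in>{i..j}. cartanA m p) = (\<Sum>m\<in>{i..j}. cartanA p m)"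
  by (simp add: cartanA_sym)

context chev begin

lemma hFE: "hh N F E m = msmul (-1) (hh N E F m)"
  unfolding hh_def by (rule br_swap)

lemma LF1: "m \<in> {1..<N} \<Longrightarrow> 1 \<le> i \<Longrightarrow> i + d < N \<Longrightarrow>
   br N (hh N E F m) (Ln N F i d) = msmul (- of_int (\<Sum>p\<in>{i..i+d}. cartanA m p)) (Ln N F i d)"
proof -
  assume a: "m \<in> {1..<N}" "1 \<le> i" "i + d < N"
  have s: "br N (hh N F E m) (Ln N F i d) = msmul (of_int (\<Sum>p\<in>{i..i+d}. cartanA m p)) (Ln N F i d)"
    using chev.L1[OF swap a] .
  have "br N (hh N E F m) (Ln N F i d) = msmul (-1) (br N (hh N F E m) (Ln N F i d))"
    by (simp add: hFE)
  also have "\<dots> = msmul (- of_int (\<Sum>p\<in>{i..i+d}. cartanA m p)) (Ln N F i d)"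
    by (simp add: s)
  finally show ?thesis .
qed

lemma XY: "1 + d < N \<Longrightarrow> br N (Ln N E 1 d) (Ln N F 1 d) = msmul ((-1)^d) (Hs N E F d)"
proof (induction d)
  case 0 then show ?case by (simp add: hh_def)
next
  case (Suc d)
  define A where "A = Ln N E 1 d"
  define B where "B = Ln N F 1 d"
  define e where "e = E (Suc (Suc d))"
  define f where "f = F (Suc (Suc d))"
  define Z where "Z = br N B f"
  have LA: "Ln N E 1 (Suc d) = br N A e" by (simp add: A_def e_def)
  have LB: "Ln N F 1 (Suc d) = Z" by (simp add: B_def f_def Z_def)
  have AB: "br N A B = msmul ((-1)^d) (Hs N E F d)" using Suc by (simp add: A_def B_def)
  have eB: "br N e B = mzero" unfolding e_def B_def using Suc.prems
    by (intro chev.L2[OF swap]) auto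
  have s: "(\<Sum>p\<in>{1..1+d}. cartanA (Suc (Suc d)) p) = -1" by (subst cartan_sum) simp
  have hB: "br N (hh N E F (Suc (Suc d))) B = B"
    unfolding B_def using Suc.prems LF1[of "Suc (Suc d)" 1 d] by (simp only: s) simp
  have ef: "br N e f = hh N E F (Suc (Suc d))" by (simp add: e_def f_def hh_def)
  have eZ: "br N e Z = msmul (-1) B" unfolding Z_def
    by (subst jacobi) (simp add: eB ef br_swap[of N B "hh N E F (Suc (Suc d))"] hB)
  have fA: "br N f A = mzero" unfolding f_def A_def using Suc.prems by (intro L2) auto
  have Af: "br N A f = mzero" using fA by (rule br_swap0)
  have Hf: "br N (Hs N E F d) f = f"
  proof -
    have "br N (Hs N E F d) f = msmul (\<Sum>m\<in>{1..d+1}. - of_int (cartanA m (Suc (Suc d)))) f"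
      unfolding f_def using Suc.prems by (intro Hs_act) (simp add: hf)
    also have "\<dots> = f"
    proof -
      have "(\<Sum>m\<in>{1..d+1}. cartanA m (Suc (Suc d))) = -1"
        by (simp only: cartan_colsum, subst cartan_sum) simp
      then have "(\<Sum>m\<in>{1..d+1}. - (of_int (cartanA m (Suc (Suc d))) :: complex)) = 1"
        by (simp add: sum_negf flip: of_int_sum)
      then show ?thesis by simp
    qed
    finally show ?thesis .
  qed
  have AZ: "br N A Z = msmul ((-1)^d) f" unfolding Z_def
    by (subst jacobi) (simp add: AB Af Hf)
  have "br N (Ln N E 1 (Suc d)) (Ln N F 1 (Suc d)) = br N (br N A e) Z" by (simp only: LA LB)
  also have "\<dots> = msub (br N A (br N e Z)) (br N e (br N A Z))" by (rule jac2)
  also have "\<dots> = msmul ((-1)^Suc d) (Hs N E F (Suc d))"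
    by (simp add: eZ AB AZ ef) (simp add: mdefs fun_eq_iff algebra_simps)
  finally show ?case .
qed

end

locale core = chev +
  fixes n :: nat and b c :: complex
  assumes Nn: "N = 2 * n" and n3: "3 \<le> n" and bc: "b * c = 1"
begin

lemma swapc: "core N F E n c b"
  unfolding core_def core_axioms_def using swap Nn n3 bc by (simp add: mult.commute)

abbreviation X where "X \<equiv> Ln N E 1 (N - 2)"
abbreviation Y where "Y \<equiv> Ln N F 1 (N - 2)"
definition cw :: "nat \<Rightarrow> complex" where
  "cw k = (if k = 1 then 1 else 0) + (if k = N - 1 then 1 else 0)"
definition Ht where "Ht = Hs N E F (N - 2)"

lemma N6: "6 \<le> N" using Nn n3 by simp

lemma rowsum: "k \<in> {1..<N} \<Longrightarrow> of_int (\<Sum>p\<in>{1..N-1}. cartanA k p) = cw k"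
  using N6 by (auto simp: cartan_sum cw_def)

lemma e12: "1 + (N - 2) = N - 1" using N6 by simp
lemma e21: "N - 2 + 1 = N - 1" using N6 by simp

lemma hX: "k \<in> {1..<N} \<Longrightarrow> br N (hh N E F k) X = msmul (cw k) X"
proof -
  assume k: "k \<in> {1..<N}"
  have "br N (hh N E F k) X = msmul (of_int (\<Sum>p\<in>{1..1+(N-2)}. cartanA k p)) X"
    by (rule L1) (use k N6 in auto)
  then show ?thesis by (simp only: e12 rowsum[OF k])
qed

lemma hY: "k \<in> {1..<N} \<Longrightarrow> br N (hh N E F k) Y = msmul (- cw k) Y"
proof -
  assume k: "k \<in> {1..<N}"
  have "br N (hh N E F k) Y = msmul (- of_int (\<Sum>p\<in>{1..1+(N-2)}. cartanA k p)) Y"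
    by (rule LF1) (use k N6 in auto)
  then show ?thesis by (simp only: e12 rowsum[OF k])
qed

lemma eX: "k \<in> {1..<N} \<Longrightarrow> br N (E k) X = mzero"
  using N6 by (intro L4) auto

lemma fX_mid: "2 \<le> k \<Longrightarrow> k \<le> N - 2 \<Longrightarrow> br N (F k) X = mzero"
  using N6 by (intro L10) auto

lemma XY_Ht: "br N X Y = Ht"
proof -
  have "even (N - 2)" using Nn by simp
  then show ?thesis unfolding Ht_def using N6 XY[of "N-2"] by simp
qed

lemma Ht_E: "j \<in> {1..<N} \<Longrightarrow> br N Ht (E j) = msmul (cw j) (E j)"
proof -
  assume j: "j \<in> {1..<N}"
  have "br N Ht (E j) = msmul (\<Sum>m\<in>{1..N-2+1}. of_int (cartanA m j)) (E j)"
    unfolding Ht_def apply (rule Hs_act) apply (rule he) using j N6 by auto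
  also have "(\<Sum>m\<in>{1..N-2+1}. (of_int (cartanA m j) :: complex)) = cw j"
    unfolding e21 using rowsum[OF j] by (simp add: cartan_colsum flip: of_int_sum)
  finally show ?thesis .
qed

lemma Ht_F: "j \<in> {1..<N} \<Longrightarrow> br N Ht (F j) = msmul (- cw j) (F j)"
proof -
  assume j: "j \<in> {1..<N}"
  have "br N Ht (F j) = msmul (\<Sum>m\<in>{1..N-2+1}. - of_int (cartanA m j)) (F j)"
    unfolding Ht_def apply (rule Hs_act) apply (rule hf) using j N6 by auto
  also have "(\<Sum>m\<in>{1..N-2+1}. - (of_int (cartanA m j) :: complex)) = - cw j"
    unfolding e21 using rowsum[OF j] by (simp add: sum_negf cartan_colsum flip: of_int_sum)
  finally show ?thesis .
qed

lemma sum_cw: "(\<Sum>m\<in>{1..N-2+1}. cw m) = 2"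
proof -
  have "(\<Sum>m\<in>{1..N-2+1}. cw m) = (\<Sum>m\<in>{1..N-1}. (if m = 1 then 1 else 0) + (if m = N - 1 then 1 else 0))"
    unfolding e21 by (simp add: cw_def)
  also have "\<dots> = 2" using N6 by (simp add: sum.distrib sum.delta)
  finally show ?thesis .
qed

lemma Ht_X: "br N Ht X = msmul 2 X"
proof -
  have "br N Ht X = msmul (\<Sum>m\<in>{1..N-2+1}. cw m) X"
    unfolding Ht_def apply (rule Hs_act) apply (rule hX) using N6 by auto
  then show ?thesis by (simp only: sum_cw)
qed

lemma Ht_Y: "br N Ht Y = msmul (-2) Y"
proof -
  have "br N Ht Y = msmul (\<Sum>m\<in>{1..N-2+1}. - cw m) Y"
    unfolding Ht_def apply (rule Hs_act) apply (rule hY) using N6 by auto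
  then show ?thesis by (simp only: sum_negf sum_cw)
qed

lemma f1X: "br N (F 1) X = Ln N E 2 (N - 3)"
proof -
  have "N - 2 = Suc (N - 3)" using N6 by simp
  then show ?thesis using N6 L7[of 1 "N-3"] by (simp add: numeral_2_eq_2)
qed

lemma f1f1X: "br N (F 1) (br N (F 1) X) = mzero"
  unfolding f1X using N6 by (intro L2) auto

lemma fNX: "br N (F (N - 1)) X = msmul (-1) (Ln N E 1 (N - 3))"
proof -
  have "N - 2 = Suc (N - 3)" "1 + Suc (N - 3) = N - 1" using N6 by simp_all
  then show ?thesis using N6 L8[of 1 "N-3"] by simp
qed

lemma XL': "br N X (Ln N E 1 (N - 3)) = mzero"
proof -
  have "N - 2 = Suc (N - 3)" using N6 by simp
  then have "br N (Ln N E 1 (N - 3)) X = mzero" using N6 L6[of 1 "N-3"] by simp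
  then show ?thesis by (rule br_swap0)
qed

lemma eL': "k \<in> {1..N-2} \<Longrightarrow> br N (E k) (Ln N E 1 (N - 3)) = mzero"
  using N6 by (intro L4) auto

lemma fL': "br N (F (N-1)) (Ln N E 1 (N - 3)) = mzero"
  using N6 by (intro L2) auto

lemma XXf1: "br N X (br N X (F 1)) = mzero"
proof -
  have "N - 2 = Suc (N - 3)" using N6 by simp
  then have "br N X (Ln N E 2 (N - 3)) = mzero" using N6 L9[of 1 "N-3"]
    by (simp add: numeral_2_eq_2)
  moreover have s: "br N X (F 1) = msmul (-1) (Ln N E 2 (N - 3))" by (subst br_swap) (simp only: f1X)
  ultimately show ?thesis by (simp only: s br_msmul_R) simp
qed

end



definition EH :: "nat \<Rightarrow> (nat \<Rightarrow> cmat) \<Rightarrow> (nat \<Rightarrow> cmat) \<Rightarrow> nat \<Rightarrow> complex \<Rightarrow> nat \<Rightarrow> cmat" where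
  "EH N E F n b i = (if i = n then msub (E n) (msmul b (Ln N E 1 (N - 2))) else msub (E i) (F (n + i)))"

declare One_nat_def [simp del]

context core begin

abbreviation "Eh \<equiv> EH N E F n b"
abbreviation "Fh \<equiv> EH N F E n c"

lemma Eh_n: "Eh n = msub (E n) (msmul b X)" by (simp add: EH_def)
lemma Fh_n: "Fh n = msub (F n) (msmul c Y)" by (simp add: EH_def)
lemma Eh_s: "i \<noteq> n \<Longrightarrow> Eh i = msub (E i) (F (n + i))" by (simp add: EH_def)
lemma Fh_s: "i \<noteq> n \<Longrightarrow> Fh i = msub (F i) (E (n + i))" by (simp add: EH_def)

lemma fY: "k \<in> {1..<N} \<Longrightarrow> br N (F k) Y = mzero" using core.eX[OF swapc] .
lemma eY_mid: "2 \<le> k \<Longrightarrow> k \<le> N - 2 \<Longrightarrow> br N (E k) Y = mzero" using core.fX_mid[OF swapc] .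
lemma e1e1Y: "br N (E 1) (br N (E 1) Y) = mzero" using core.f1f1X[OF swapc] .
lemma YYe1: "br N Y (br N Y (E 1)) = mzero" using core.XXf1[OF swapc] .

lemma Xe: "k \<in> {1..<N} \<Longrightarrow> br N X (E k) = mzero" by (rule br_swap0, rule eX)
lemma Xf_mid: "2 \<le> k \<Longrightarrow> k \<le> N - 2 \<Longrightarrow> br N X (F k) = mzero" by (rule br_swap0, rule fX_mid)
lemma XfN: "br N X (F (N - 1)) = Ln N E 1 (N - 3)"
  by (subst br_swap) (simp add: fNX)

lemma bc': "c * b = 1" using bc by (simp add: mult.commute)
lemma pN: "n + (n - 1) = N - 1" using Nn n3 by simp
lemma Nm: "N - 2 = n + (n - 2)" using Nn n3 by simp

lemma Hsm: "1 \<le> i \<Longrightarrow> i < n \<Longrightarrow> br N (Eh i) (Fh i) = msub (hh N E F i) (hh N E F (n + i))"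
proof -
  assume i: "1 \<le> i" "i < n"
  have 1: "br N (E i) (E (n + i)) = mzero" using i Nn by (intro ee_far) auto
  have 2: "br N (F (n + i)) (F i) = mzero" using i Nn by (intro ff_far) auto
  show ?thesis using i
    by (simp add: Eh_s Fh_s 1 2 fe_same hh_def[of N E F i, symmetric])
qed

lemma Hn: "br N (Eh n) (Fh n) = madd (hh N E F n) Ht"
proof -
  have 1: "br N (E n) Y = mzero" using Nn n3 by (intro eY_mid) auto
  have 2: "br N X (F n) = mzero" using Nn n3 by (intro Xf_mid) auto
  show ?thesis
    by (simp add: Eh_n Fh_n 1 2 hh_def[of N E F n, symmetric] XY_Ht) (simp add: mdefs fun_eq_iff bc bc'
        flip: mult.assoc[of b c])
qed


lemma cwv: "k \<ge> 1 \<Longrightarrow> cw k = (if k = 1 then 1 else 0) + (if k = n + (n - 1) then 1 else 0)"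
  unfolding cw_def using Nn n3 by auto

lemma C1: assumes i: "i \<in> {1..n}" and j: "j \<in> {1..n}"
  shows "br N (br N (Eh i) (Fh i)) (Eh j) = msmul (of_int (Mn n i j)) (Eh j)"
proof (cases "i = n")
  case False
  then have il: "1 \<le> i" "i < n" using i by auto
  have H: "br N (Eh i) (Fh i) = msub (hh N E F i) (hh N E F (n + i))" using Hsm il .
  show ?thesis
  proof (cases "j = n")
    case False
    then have jl: "1 \<le> j" "j < n" using j by auto
    have a: "br N (hh N E F i) (E j) = msmul (of_int (cartanA i j)) (E j)"
      using il jl Nn by (intro he) auto
    have b: "br N (hh N E F (n+i)) (E j) = msmul (of_int (cartanA (n+i) j)) (E j)"
      using il jl Nn by (intro he) auto
    have c: "br N (hh N E F i) (F (n+j)) = msmul (- of_int (cartanA i (n+j))) (F (n+j))"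
      using il jl Nn by (intro hf) auto
    have d: "br N (hh N E F (n+i)) (F (n+j)) = msmul (- of_int (cartanA (n+i) (n+j))) (F (n+j))"
      using il jl Nn by (intro hf) auto
    have v: "cartanA (n+i) j = 0" "cartanA i (n+j) = 0" "cartanA (n+i) (n+j) = cartanA i j"
       "Mn n i j = cartanA i j"
      using il jl by (auto simp: cartanA_def Mn_def)
    show ?thesis unfolding H using il jl
      by (simp add: Eh_s a b c d v) (simp add: mdefs fun_eq_iff algebra_simps)
  next
    case True
    have a: "br N (hh N E F i) (E n) = msmul (of_int (cartanA i n)) (E n)"
      using il Nn by (intro he) auto
    have b: "br N (hh N E F (n+i)) (E n) = msmul (of_int (cartanA (n+i) n)) (E n)"
      using il Nn by (intro he) auto
    have c: "br N (hh N E F i) X = msmul (cw i) X" using il Nn by (intro hX) auto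
    have d: "br N (hh N E F (n+i)) X = msmul (cw (n+i)) X" using il Nn by (intro hX) auto
    have v: "cartanA i n = (if i = n - 1 then -1 else 0)" "cartanA (n+i) n = (if i = 1 then -1 else 0)"
       "cw i = (if i = 1 then 1 else 0)" "cw (n+i) = (if i = n - 1 then 1 else 0)"
       "Mn n i n = (if i = 1 then 1 else if i = n - 1 then -1 else 0)"
      using il n3 by (auto simp: cartanA_def Mn_def cwv)
    have ne: "i = 1 \<Longrightarrow> i \<noteq> n - 1" using n3 by auto
    show ?thesis using True ne
      by (simp add: H Eh_n a b c d v) (auto simp: mdefs fun_eq_iff algebra_simps)
  qed
next
  case True
  have H: "br N (Eh i) (Fh i) = madd (hh N E F n) Ht" using Hn True by simp
  show ?thesis
  proof (cases "j = n")
    case False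
    then have jl: "1 \<le> j" "j < n" using j by auto
    have a: "br N (hh N E F n) (E j) = msmul (of_int (cartanA n j)) (E j)"
      using jl Nn by (intro he) auto
    have b: "br N Ht (E j) = msmul (cw j) (E j)" using jl Nn by (intro Ht_E) auto
    have c: "br N (hh N E F n) (F (n+j)) = msmul (- of_int (cartanA n (n+j))) (F (n+j))"
      using jl Nn by (intro hf) auto
    have d: "br N Ht (F (n+j)) = msmul (- cw (n+j)) (F (n+j))" using jl Nn by (intro Ht_F) auto
    have v: "cartanA n j = (if j = n - 1 then -1 else 0)" "cartanA n (n+j) = (if j = 1 then -1 else 0)"
       "cw j = (if j = 1 then 1 else 0)" "cw (n+j) = (if j = n - 1 then 1 else 0)"
       "Mn n n j = (if j = 1 then 1 else if j = n - 1 then -1 else 0)"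
      using jl n3 by (auto simp: cartanA_def Mn_def cwv)
    have ne: "j = 1 \<Longrightarrow> j \<noteq> n - 1" using n3 by auto
    show ?thesis unfolding True Hn using False ne
      by (simp add: Eh_s a b c d v) (auto simp: mdefs fun_eq_iff algebra_simps)
  next
    case jn: True
    have a: "br N (hh N E F n) (E n) = msmul 2 (E n)"
      using he[of n n] Nn n3 by (simp add: cartanA_def)
    have cwn: "cw n = 0" using n3 by (simp add: cwv)
    have nI: "n \<in> {1..<N}" using Nn n3 by simp
    have b: "br N Ht (E n) = mzero" using Ht_E[OF nI] by (simp add: cwn)
    have c: "br N (hh N E F n) X = mzero" using hX[OF nI] by (simp add: cwn)
    have v: "Mn n n n = 2" by (simp add: Mn_def)
    show ?thesis unfolding True jn Hn
      by (simp add: Eh_n a b c v Ht_X) (simp add: mdefs fun_eq_iff algebra_simps)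
  qed
qed

end



lemma fp1: "((br N x) ^^ 1) y = br N x y" by (simp add: One_nat_def)
lemma fp2: "((br N x) ^^ 2) y = br N x (br N x y)" by (simp add: numeral_2_eq_2)

context core begin

lemma nI: "k \<in> {1..N-1} \<Longrightarrow> k \<in> {1..<N}" using Nn by auto

lemma C2: assumes i: "i \<in> {1..n}" and j: "j \<in> {1..n}" and ij: "i \<noteq> j" and M: "Mn n i j \<le> 0"
  shows "br N (Eh i) (Fh j) = mzero"
proof -
  have nb: "\<not> (i = 1 \<and> j = n)" "\<not> (i = n \<and> j = 1)" using M n3 by (auto simp: Mn_def)
  show ?thesis
  proof (cases "i = n")
    case False
    show ?thesis
    proof (cases "j = n")
      case False
      have 1: "br N (E i) (F j) = mzero" using i j ij Nn by (intro ef) auto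
      have 2: "br N (E i) (E (n + j)) = mzero" using i j False \<open>i \<noteq> n\<close> Nn by (intro ee_far) auto
      have 3: "br N (F (n + i)) (F j) = mzero" using i j False \<open>i \<noteq> n\<close> Nn by (intro ff_far) auto
      have 4: "br N (F (n + i)) (E (n + j)) = mzero" using i j ij False \<open>i \<noteq> n\<close> Nn by (intro fe) auto
      show ?thesis using False \<open>i \<noteq> n\<close> by (simp add: Eh_s Fh_s 1 2 3 4)
    next
      case True
      have 1: "br N (E i) (F n) = mzero" using i ij True Nn by (intro ef) auto
      have 2: "br N (E i) Y = mzero" using i nb True \<open>i \<noteq> n\<close> Nn by (intro eY_mid) auto
      have 3: "br N (F (n + i)) (F n) = mzero" using i nb True \<open>i \<noteq> n\<close> Nn by (intro ff_far) auto
      have 4: "br N (F (n + i)) Y = mzero" using i True \<open>i \<noteq> n\<close> Nn by (intro fY) auto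
      show ?thesis using True \<open>i \<noteq> n\<close> by (simp add: Eh_s Fh_n 1 2 3 4)
    qed
  next
    case True
    then have jn: "j \<noteq> n" using ij by simp
    have 1: "br N (E n) (F j) = mzero" using j ij True Nn by (intro ef) auto
    have 2: "br N (E n) (E (n + j)) = mzero" using j nb True jn Nn by (intro ee_far) auto
    have 3: "br N X (F j) = mzero" using j nb True jn Nn by (intro Xf_mid) auto
    have 4: "br N X (E (n + j)) = mzero" using j jn Nn by (intro Xe) auto
    show ?thesis using True jn by (simp add: Eh_n Fh_s 1 2 3 4)
  qed
qed

lemma C3: assumes i: "i \<in> {1..n}" and j: "j \<in> {1..n}" and ij: "i \<noteq> j" and M: "Mn n i j \<le> 0"
  shows "((br N (Eh i)) ^^ nat (1 - Mn n i j)) (Eh j) = mzero"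
proof -
  have nb: "\<not> (i = 1 \<and> j = n)" "\<not> (i = n \<and> j = 1)" using M n3 by (auto simp: Mn_def)
  show ?thesis
  proof (cases "i = j + 1 \<or> j = i + 1")
    case adj: True
    have Mv: "nat (1 - Mn n i j) = 2" using adj by (auto simp: Mn_def)
    show ?thesis unfolding Mv fp2
    proof (cases "i = n")
      case False
      show "br N (Eh i) (br N (Eh i) (Eh j)) = mzero"
      proof (cases "j = n")
        case False
        define p where "p = n + i"
        define q where "q = n + j"
        have 1: "br N (E i) (F q) = mzero" using i j False \<open>i \<noteq> n\<close> Nn unfolding q_def by (intro ef) auto
        have 2: "br N (F p) (E j) = mzero" using i j False \<open>i \<noteq> n\<close> Nn unfolding p_def by (intro fe) auto
        have 3: "br N (E i) (br N (E i) (E j)) = mzero" using i j adj False \<open>i \<noteq> n\<close> Nn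
          by (intro ee_adj) auto
        have 4: "br N (E i) (br N (F p) (F q)) = mzero" using i j False \<open>i \<noteq> n\<close> Nn
          unfolding p_def q_def by (intro jac0 ef) auto
        have 5: "br N (F p) (br N (E i) (E j)) = mzero" using i j ij False \<open>i \<noteq> n\<close> Nn
          unfolding p_def by (intro jac0 fe) auto
        have 6: "br N (F p) (br N (F p) (F q)) = mzero" using i j adj False \<open>i \<noteq> n\<close> Nn
          unfolding p_def q_def by (intro ff_adj) auto
        show ?thesis using False \<open>i \<noteq> n\<close>
          by (simp add: Eh_s p_def[symmetric] q_def[symmetric] 1 2 3 4 5 6)
      next
        case True
        then have iv: "i = n - 1" using adj \<open>i \<noteq> n\<close> i by auto
        let ?L = "Ln N E 1 (N - 3)"
        have Ehi: "Eh i = msub (E (n - 1)) (F (N - 1))" using iv n3 pN by (simp add: Eh_s)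
        have 1: "br N (E (n - 1)) X = mzero" using n3 Nn by (intro eX) auto
        have 2: "br N (F (N - 1)) (E n) = mzero" using n3 Nn by (intro fe) auto
        have 3: "br N (E (n - 1)) (br N (E (n - 1)) (E n)) = mzero" using n3 Nn by (intro ee_adj) auto
        have 4: "br N (E (n - 1)) ?L = mzero" using n3 Nn by (intro eL') auto
        have 5: "br N (F (N - 1)) (br N (E (n - 1)) (E n)) = mzero" using n3 Nn by (intro jac0 fe) auto
        show ?thesis unfolding Ehi True Eh_n
          by (simp add: 1 2 3 4 5 fNX fL')
      qed
    next
      case True
      then have jv: "j = n - 1" using adj j by auto
      let ?L = "Ln N E 1 (N - 3)"
      have Ehj: "Eh j = msub (E (n - 1)) (F (N - 1))" using jv n3 pN by (simp add: Eh_s)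
      have 1: "br N (E n) (F (N - 1)) = mzero" using n3 Nn by (intro ef) auto
      have 2: "br N X (E (n - 1)) = mzero" using n3 Nn by (intro Xe) auto
      have 3: "br N (E n) (br N (E n) (E (n - 1))) = mzero" using n3 Nn by (intro ee_adj) auto
      have 4: "br N (E n) ?L = mzero" using n3 Nn by (intro eL') auto
      have 5: "br N X (br N (E n) (E (n - 1))) = mzero" using n3 Nn by (intro jac0 Xe) auto
      show "br N (Eh i) (br N (Eh i) (Eh j)) = mzero" unfolding Ehj True Eh_n
        by (simp add: 1 2 3 4 5 XfN XL')
    qed
  next
    case nadj: False
    have Mv: "nat (1 - Mn n i j) = 1" using nadj nb ij by (auto simp: Mn_def)
    show ?thesis unfolding Mv fp1
    proof (cases "i = n")
      case False
      show "br N (Eh i) (Eh j) = mzero"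
      proof (cases "j = n")
        case False
        have 1: "br N (E i) (E j) = mzero" using i j ij nadj Nn by (intro ee_far) auto
        have 2: "br N (E i) (F (n + j)) = mzero" using i j False Nn by (intro ef) auto
        have 3: "br N (F (n + i)) (E j) = mzero" using i j \<open>i \<noteq> n\<close> Nn by (intro fe) auto
        have 4: "br N (F (n + i)) (F (n + j)) = mzero" using i j ij nadj Nn False \<open>i \<noteq> n\<close>
          by (intro ff_far) auto
        show ?thesis using False \<open>i \<noteq> n\<close> by (simp add: Eh_s 1 2 3 4)
      next
        case True
        have 1: "br N (E i) (E n) = mzero" using i ij nadj True Nn by (intro ee_far) auto
        have 2: "br N (E i) X = mzero" using i Nn by (intro eX) auto
        have 3: "br N (F (n + i)) (E n) = mzero" using i \<open>i \<noteq> n\<close> Nn by (intro fe) auto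
        have 4: "br N (F (n + i)) X = mzero" using i nb nadj True \<open>i \<noteq> n\<close> Nn by (intro fX_mid) auto
        show ?thesis using True \<open>i \<noteq> n\<close> by (simp add: Eh_s Eh_n 1 2 3 4)
      qed
    next
      case True
      then have jn: "j \<noteq> n" using ij by simp
      have 1: "br N (E n) (E j) = mzero" using j ij nadj True Nn by (intro ee_far) auto
      have 2: "br N (E n) (F (n + j)) = mzero" using j jn Nn by (intro ef) auto
      have 3: "br N X (E j) = mzero" using j Nn by (intro Xe) auto
      have 4: "br N X (F (n + j)) = mzero" using j nb nadj True jn Nn by (intro Xf_mid) auto
      show "br N (Eh i) (Eh j) = mzero" using True jn by (simp add: Eh_s Eh_n 1 2 3 4)
    qed
  qed
qed

lemma Mpos: assumes i: "i \<in> {1..n}" and j: "j \<in> {1..n}" and ij: "i \<noteq> j" and M: "Mn n i j > 0"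
  shows "(i = 1 \<and> j = n \<or> i = n \<and> j = 1) \<and> Mn n i j = 1"
  using assms n3 by (auto simp: Mn_def split: if_splits)

lemma C4: assumes i: "i \<in> {1..n}" and j: "j \<in> {1..n}" and ij: "i \<noteq> j" and M: "Mn n i j > 0"
  shows "br N (Eh i) (Eh j) = mzero"
proof -
  have n1: "n \<noteq> 1" using n3 by simp
  consider "i = 1" "j = n" | "i = n" "j = 1" using Mpos[OF assms] by blast
  then show ?thesis
  proof cases
    case 1
    have a: "br N (E 1) (E n) = mzero" using n3 Nn by (intro ee_far) auto
    have b: "br N (E 1) X = mzero" using n3 Nn by (intro eX) auto
    have c: "br N (F (n + 1)) (E n) = mzero" using n3 Nn by (intro fe) auto
    have d: "br N (F (n + 1)) X = mzero" using n3 Nn by (intro fX_mid) auto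
    show ?thesis using 1 n1 by (simp add: Eh_s Eh_n a b c d)
  next
    case 2
    have a: "br N (E n) (E 1) = mzero" using n3 Nn by (intro ee_far) auto
    have b: "br N X (E 1) = mzero" using n3 Nn by (intro Xe) auto
    have c: "br N (E n) (F (n + 1)) = mzero" using n3 Nn by (intro ef) auto
    have d: "br N X (F (n + 1)) = mzero" using n3 Nn by (intro Xf_mid) auto
    show ?thesis using 2 n1 by (simp add: Eh_s Eh_n a b c d)
  qed
qed

lemma C5: assumes i: "i \<in> {1..n}" and j: "j \<in> {1..n}" and ij: "i \<noteq> j" and M: "Mn n i j > 0"
  shows "((br N (Eh i)) ^^ nat (Mn n i j + 1)) (Fh j) = mzero"
proof -
  have n1: "n \<noteq> 1" using n3 by simp
  have Mv: "nat (Mn n i j + 1) = 2" using Mpos[OF assms] by simp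
  consider "i = 1" "j = n" | "i = n" "j = 1" using Mpos[OF assms] by blast
  then show ?thesis
  proof cases
    case 1
    have a: "br N (E 1) (F n) = mzero" using n3 Nn by (intro ef) auto
    have b: "br N (F (n + 1)) Y = mzero" using n3 Nn by (intro fY) auto
    have c: "br N (E 1) (br N (F (n + 1)) (F n)) = mzero" using n3 Nn by (intro jac0 ef) auto
    have d: "br N (F (n + 1)) (br N (E 1) Y) = mzero" using n3 Nn by (intro jac0 fe fY) auto
    have e: "br N (F (n + 1)) (br N (F (n + 1)) (F n)) = mzero" using n3 Nn by (intro ff_adj) auto
    show ?thesis unfolding Mv fp2 using 1 n1 by (simp add: Eh_s Fh_n a b c d e e1e1Y)
  next
    case 2
    have a: "br N (E n) (F 1) = mzero" using n3 Nn by (intro ef) auto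
    have b: "br N X (E (n + 1)) = mzero" using n3 Nn by (intro Xe) auto
    have c: "br N (E n) (br N X (F 1)) = mzero" using n3 Nn by (intro jac0 eX ef) auto
    have d: "br N X (br N (E n) (E (n + 1))) = mzero" using n3 Nn by (intro jac0 Xe) auto
    have e: "br N (E n) (br N (E n) (E (n + 1))) = mzero" using n3 Nn by (intro ee_adj) auto
    show ?thesis unfolding Mv fp2 using 2 n1 by (simp add: Eh_n Fh_s a b c d e XXf1)
  qed
qed

end



lemma lnest_Ln: "lnest N G (Suc d) = Ln N G 1 d"
  by (induction d) (simp_all add: One_nat_def)

lemma rnest_Ln: "rnest N G (Suc d) = msmul ((-1)^d) (Ln N G 1 d)"
proof (induction d)
  case 0 then show ?case by (simp add: One_nat_def)
next
  case (Suc d)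
  have "rnest N G (Suc (Suc d)) = br N (G (Suc (Suc d))) (rnest N G (Suc d))" by simp
  also have "\<dots> = msmul ((-1)^Suc d) (Ln N G 1 (Suc d))"
    by (simp add: Suc br_swap[of N "G (Suc (Suc d))"] One_nat_def)
  finally show ?case .
qed

lemma sl_msub: "X \<in> sl N \<Longrightarrow> Y \<in> sl N \<Longrightarrow> msub X Y \<in> sl N"
  by (simp add: sl_def is_mat_def msub_def sum_subtractf)

lemma Ln_sl: "(\<And>k. i \<le> k \<Longrightarrow> k \<le> i + d \<Longrightarrow> G k \<in> sl N) \<Longrightarrow> Ln N G i d \<in> sl N"
  by (induction d) (auto intro: sl_br)

theorem lemma2p2:
  fixes n :: nat and a :: complex and E F :: "nat \<Rightarrow> cmat"
  assumes "n \<ge> 3"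
    and "a \<noteq> 0" and "a \<noteq> 1" and "a \<noteq> -1"
    and "chevalley_gens (2 * n) E F"
  shows "\<exists>\<phi>. gim_hom n (2 * n) \<phi> \<and>
           (\<forall>i\<in>{1..n}.
              \<phi> (Gen (Ge i)) =
                msub (E i) (if n + i = 2 * n then msmul (inverse a) (lnest (2 * n) E (2 * n - 1))
                            else F (n + i)) \<and>
              \<phi> (Gen (Gf i)) =
                msub (F i) (if n + i = 2 * n then msmul a (rnest (2 * n) F (2 * n - 1))
                            else E (n + i)))"
proof -
  define N where "N = 2 * n"
  have cr: "core N E F n (inverse a) a"
    unfolding core_def core_axioms_def chev_def N_def using assms by simp
  interpret cr: core N E F n "inverse a" a by (rule cr)
  have sw: "core N F E n a (inverse a)" by (rule cr.swapc)
  define ge where "ge i = (if i \<in> {1..n} then EH N E F n (inverse a) i else mzero)" for i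
  define gf where "gf i = (if i \<in> {1..n} then EH N F E n a i else mzero)" for i
  define g where "g x = (case x of Ge i \<Rightarrow> ge i | Gf i \<Rightarrow> gf i | Gh i \<Rightarrow> br N (ge i) (gf i))" for x
  have gGe: "g (Ge i) = ge i" and gGf: "g (Gf i) = gf i" and gGh: "g (Gh i) = br N (ge i) (gf i)" for i
    by (simp_all add: g_def)
  have slE: "k \<in> {1..<N} \<Longrightarrow> E k \<in> sl N" and slF: "k \<in> {1..<N} \<Longrightarrow> F k \<in> sl N" for k
    using cr.sl_E cr.sl_F by auto
  have slX: "Ln N E 1 (N - 2) \<in> sl N" using assms(1) slE by (intro Ln_sl) (auto simp: N_def)
  have slY: "Ln N F 1 (N - 2) \<in> sl N" using assms(1) slF by (intro Ln_sl) (auto simp: N_def)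
  have slge: "ge i \<in> sl N" for i
  proof (cases "i \<in> {1..n}")
    case True
    then show ?thesis using slE slF slX
      by (auto simp: ge_def EH_def N_def intro!: sl_msub sl_msmul)
  next
    case False then show ?thesis by (auto simp: ge_def sl_mzero)
  qed
  have slgf: "gf i \<in> sl N" for i
  proof (cases "i \<in> {1..n}")
    case True
    then show ?thesis using slE slF slY
      by (auto simp: gf_def EH_def N_def intro!: sl_msub sl_msmul)
  next
    case False then show ?thesis by (auto simp: gf_def sl_mzero)
  qed
  have slg: "g x \<in> sl N" for x
    by (cases x) (simp_all add: g_def slge slgf sl_br)
  have hom: "gim_hom n N (ev N g)"
  proof (rule hom_lemma)
    fix i j assume i: "i \<in> {1..n}" and j: "j \<in> {1..n}"
    show "br N (g (Gh i)) (g (Ge j)) = msmul (of_int (Mn n i j)) (g (Ge j))"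
      using cr.C1[OF i j] i j by (simp add: gGh gGe ge_def gf_def)
    have s: "br N (EH N F E n a i) (EH N E F n (inverse a) i) =
       msmul (-1) (br N (EH N E F n (inverse a) i) (EH N F E n a i))" by (rule br_swap)
    have "br N (br N (EH N E F n (inverse a) i) (EH N F E n a i)) (EH N F E n a j) =
       msmul (-1) (br N (br N (EH N F E n a i) (EH N E F n (inverse a) i)) (EH N F E n a j))"
      by (simp add: s)
    also have "\<dots> = msmul (- of_int (Mn n i j)) (EH N F E n a j)"
      using core.C1[OF sw i j] by simp
    finally show "br N (g (Gh i)) (g (Gf j)) = msmul (- of_int (Mn n i j)) (g (Gf j))"
      using i j by (simp add: gGh gGf ge_def gf_def)
  next
    fix i j assume i: "i \<in> {1..n}" and j: "j \<in> {1..n}" and ij: "i \<noteq> j"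
    { assume M: "Mn n i j \<le> 0"
      show "br N (g (Ge i)) (g (Gf j)) = mzero"
        using cr.C2[OF i j ij M] i j by (simp add: gGe gGf ge_def gf_def)
      show "br N (g (Gf i)) (g (Ge j)) = mzero"
        using core.C2[OF sw i j ij M] i j by (simp add: gGe gGf ge_def gf_def)
      show "((br N (g (Ge i))) ^^ nat (1 - Mn n i j)) (g (Ge j)) = mzero"
        using cr.C3[OF i j ij M] i j by (simp add: gGe ge_def)
      show "((br N (g (Gf i))) ^^ nat (1 - Mn n i j)) (g (Gf j)) = mzero"
        using core.C3[OF sw i j ij M] i j by (simp add: gGf gf_def)
    }
    { assume M: "Mn n i j > 0"
      show "br N (g (Ge i)) (g (Ge j)) = mzero"
        using cr.C4[OF i j ij M] i j by (simp add: gGe ge_def)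
      show "br N (g (Gf i)) (g (Gf j)) = mzero"
        using core.C4[OF sw i j ij M] i j by (simp add: gGf gf_def)
      show "((br N (g (Ge i))) ^^ nat (Mn n i j + 1)) (g (Gf j)) = mzero"
        using cr.C5[OF i j ij M] i j by (simp add: gGe gGf ge_def gf_def)
      show "((br N (g (Gf i))) ^^ nat (Mn n i j + 1)) (g (Ge j)) = mzero"
        using core.C5[OF sw i j ij M] i j by (simp add: gGe gGf ge_def gf_def)
    }
  qed (simp_all add: slg gGh gGe gGf)
  have e1: "N - 1 = Suc (N - 2)" using assms(1) by (simp add: N_def)
  have nn: "n + i = N \<longleftrightarrow> i = n" for i by (auto simp: N_def)
  have ev: "even (N - 2)" by (simp add: N_def)
  show ?thesis
  proof (intro exI conjI ballI)
    show "gim_hom n (2 * n) (ev N g)" using hom by (simp add: N_def)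
  next
    fix i assume i: "i \<in> {1..n}"
    show "ev N g (Gen (Ge i)) =
        msub (E i) (if n + i = 2 * n then msmul (inverse a) (lnest (2 * n) E (2 * n - 1)) else F (n + i))"
      using i by (simp add: gGe ge_def EH_def N_def[symmetric] nn e1 lnest_Ln)
    show "ev N g (Gen (Gf i)) =
        msub (F i) (if n + i = 2 * n then msmul a (rnest (2 * n) F (2 * n - 1)) else E (n + i))"
      using i ev by (simp add: gGf gf_def EH_def N_def[symmetric] nn e1 rnest_Ln)
  qed
qed


end
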